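(* $\displaystyle\liminf_{k\to\infty}\frac{\gamma(k)}{k}\leq\frac{9}{10}$ and $\displaystyle\limsup_{k\to\infty}\frac{\gamma(k)}{k}\leq\frac32$.
   Context: The Thue–Morse word is $\mathbf t=\mathbf t_1\mathbf t_2\cdots$ where $\mathbf t_i\in\{0,1\}$ has the parity of the number of $1$'s in the binary expansion of $i-1$. For positive integers $\alpha\le\beta$, $\langle\alpha,\beta\rangle=\mathbf t_\alpha\cdots\mathbf t_\beta$. A $k$-anti-power is a word $w_1\cdots w_k$ with $w_1,\dots,w_k$ pairwise distinct words of equal length. $\mathcal F(k)$ is the set of odd positive integers $m$ such that $\langle 1,km\rangle$ is a $k$-anti-power (this set is nonempty for every $k$). $\gamma(k)=\min\mathcal F(k)$. *)

theory Defs
  imports Complex_Main "HOL-Library.Extended_Real" "HOL-Library.Liminf_Limsup"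
begin

fun bin_ones :: "nat \<Rightarrow> nat" where
  "bin_ones n = (if n = 0 then 0 else n mod 2 + bin_ones (n div 2))"

text \<open>Thue--Morse word, 1-indexed: t_i is the parity of the number of 1's in binary of i-1.\<close>
definition tm :: "nat \<Rightarrow> nat" where
  "tm i = bin_ones (i - 1) mod 2"

definition tm_factor :: "nat \<Rightarrow> nat \<Rightarrow> nat list" where
  "tm_factor \<alpha> \<beta> = map tm [\<alpha>..<Suc \<beta>]"

definition anti_power :: "nat \<Rightarrow> 'a list \<Rightarrow> bool" where
  "anti_power k w \<longleftrightarrow> (\<exists>ws. length ws = k \<and> w = concat ws \<and>
      (\<forall>u\<in>set ws. \<forall>v\<in>set ws. length u = length v) \<and> distinct ws)"

definition F_set :: "nat \<Rightarrow> nat set" where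
  "F_set k = {m. odd m \<and> 0 < m \<and> anti_power k (tm_factor 1 (k * m))}"

definition gamma :: "nat \<Rightarrow> nat" where
  "gamma k = (LEAST m. m \<in> F_set k)"

end

theory Submission
  imports Defs
begin

declare bin_ones.simps[simp del]
lemma bo0[simp]: "bin_ones 0 = 0" by (simp add: bin_ones.simps)
lemma bo_even[simp]: "bin_ones (2*n) = bin_ones n"
  by (cases "n=0") (auto simp: bin_ones.simps[of "2*n"])
lemma bo_odd[simp]: "bin_ones (Suc (2*n)) = Suc (bin_ones n)"
  by (simp add: bin_ones.simps[of "Suc (2*n)"])

definition tb :: "nat \<Rightarrow> bool" where "tb n = odd (bin_ones n)"
lemma tb0[simp]: "tb 0 = False" by (simp add: tb_def)
lemma tb_even[simp]: "tb (2*n) = tb n" by (simp add: tb_def)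
lemma tb_odd[simp]: "tb (Suc (2*n)) = (\<not> tb n)" by (simp add: tb_def)
lemma tb_odd'[simp]: "tb (2*n+1) = (\<not> tb n)" by (simp add: tb_def)
lemma tb1[simp]: "tb 1 = True" using tb_odd[of 0] by simp
lemma tbS0[simp]: "tb (Suc 0) = True" using tb_odd[of 0] by simp

lemma tb_split: "r < 2^b \<Longrightarrow> tb (2^b*u + r) = (tb u \<noteq> tb r)"
proof (induction b arbitrary: u r)
  case 0 then show ?case by simp
next
  case (Suc b)
  have r: "r = 2*(r div 2) + r mod 2" by simp
  have lt: "r div 2 < 2^b" using Suc.prems by simp
  have e: "2^Suc b*u + r = 2*(2^b*u + r div 2) + r mod 2" by simp
  show ?case
  proof (cases "even r")
    case True
    then have "r mod 2 = 0" by simp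
    then show ?thesis using e Suc.IH[OF lt, of u] tb_even[of "r div 2"] r
      by (metis add.right_neutral tb_even)
  next
    case False
    then have "r mod 2 = 1" by presburger
    then show ?thesis using e Suc.IH[OF lt, of u] r
      by (metis tb_odd')
  qed
qed

lemma no3: "\<not> (tb n = tb (n+1) \<and> tb (n+1) = tb (n+2))"
proof (cases "even n")
  case True
  then obtain a where "n = 2*a" by blast
  then show ?thesis by simp
next
  case False
  then obtain a where a: "n = 2*a+1" using oddE by blast
  have "n+1 = 2*(a+1)" "n+2 = 2*(a+1)+1" using a by simp_all
  then show ?thesis by (metis tb_even tb_odd')
qed

lemma par1:
  assumes "even x" "odd y" "\<forall>q<4. tb (x+q) = tb (y+q)" shows False
proof -
  obtain a where a: "x = 2*a" using assms(1) by blast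
  obtain w where w: "y = 2*w+1" using assms(2) oddE by blast
  have e0: "tb (x+0) = tb (y+0)" "tb (x+1) = tb (y+1)" "tb (x+2) = tb (y+2)" "tb (x+3) = tb (y+3)"
    using assms(3)[rule_format, of 0] assms(3)[rule_format, of 1] assms(3)[rule_format, of 2] assms(3)[rule_format, of 3] by simp_all
  have x1: "tb (x+1) = (\<not> tb a)" using a by simp
  have q2: "x+2 = 2*(a+1)" "x+3 = 2*(a+1)+1" "y+0 = 2*w+1" "y+1 = 2*(w+1)" "y+2 = 2*(w+1)+1" "y+3 = 2*(w+2)"
    using a w by simp_all
  have x2: "tb (x+2) = tb (a+1)" by (simp only: q2 tb_even)
  have x3: "tb (x+3) = (\<not> tb (a+1))" by (simp only: q2 tb_odd')
  have y0: "tb (y+0) = (\<not> tb w)" by (simp only: q2 tb_odd')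
  have y1: "tb (y+1) = tb (w+1)" by (simp only: q2 tb_even)
  have y2: "tb (y+2) = (\<not> tb (w+1))" by (simp only: q2 tb_odd')
  have y3: "tb (y+3) = tb (w+2)" by (simp only: q2 tb_even)
  have "tb x = tb a" using a by simp
  then show False using e0 x1 x2 x3 y0 y1 y2 y3 no3[of w] by (auto simp: add.commute)
qed

lemma par: "4 \<le> L \<Longrightarrow> \<forall>q<L. tb (x+q) = tb (y+q) \<Longrightarrow> x mod 2 = y mod 2"
proof -
  assume L: "4 \<le> L" and h: "\<forall>q<L. tb (x+q) = tb (y+q)"
  have h4: "\<forall>q<4. tb (x+q) = tb (y+q)" and h4': "\<forall>q<4. tb (y+q) = tb (x+q)" using L h by auto
  show ?thesis
  proof (rule ccontr)
    assume "x mod 2 \<noteq> y mod 2"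
    then have "(even x \<and> odd y) \<or> (odd x \<and> even y)" by presburger
    then show False using par1[OF _ _ h4] par1[OF _ _ h4'] by blast
  qed
qed

lemma mod2: "0 < (M::nat) \<Longrightarrow> (2*a+1) mod (2*M) = 2*(a mod M) + 1"
proof -
  assume M: "0 < M"
  have e: "2*a+1 = (2*M)*(a div M) + (2*(a mod M)+1)"
  proof -
    have "a = M*(a div M) + a mod M" by simp
    then show ?thesis by (metis add.assoc distrib_left mult.assoc)
  qed
  have "a mod M < M" using M by simp
  then have "2*(a mod M)+1 < 2*M" by simp
  then show ?thesis by (subst e) (simp only: mod_mult_self4 mod_less)
qed

lemma sync: "3*2^c + 1 \<le> L \<Longrightarrow> \<forall>q<L. tb (x+q) = tb (y+q) \<Longrightarrow> x mod 2^(c+1) = y mod 2^(c+1)"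
proof (induction c arbitrary: x y L)
  case 0 then show ?case using par[of L x y] by simp
next
  case (Suc c)
  have "(6::nat) \<le> 6*2^c" by simp
  moreover have "(3::nat)*2^Suc c + 1 = 6*2^c + 1" by simp
  ultimately have "4 \<le> L" using Suc.prems(1) by linarith
  then have p: "x mod 2 = y mod 2" using par[of L x y] Suc.prems by simp
  let ?L = "3*2^c+1::nat"
  show ?case
  proof (cases "even x")
    case True
    obtain a where a: "x = 2*a" using True by blast
    obtain b where b: "y = 2*b" using True p by (metis dvd_imp_mod_0 mod_0_imp_dvd evenE)
    have "\<forall>q<?L. tb (a+q) = tb (b+q)"
    proof (intro allI impI)
      fix q assume q: "q < ?L"
      then have "2*q < L" using Suc.prems(1) by simp
      then have "tb (x+2*q) = tb (y+2*q)" using Suc.prems(2) by blast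
      then show "tb (a+q) = tb (b+q)" using a b tb_even[of "a+q"] tb_even[of "b+q"] by (simp add: algebra_simps)
    qed
    then have "a mod 2^(c+1) = b mod 2^(c+1)" using Suc.IH[of ?L] by simp
    then show ?thesis using a b by (metis mod_mult_mult1 power_Suc add.commute plus_1_eq_Suc)
  next
    case False
    obtain a where a: "x = 2*a+1" using False oddE by blast
    obtain b where b: "y = 2*b+1" using False p by (metis odd_iff_mod_2_eq_one oddE)
    have "\<forall>q<?L. tb (a+q) = tb (b+q)"
    proof (intro allI impI)
      fix q assume q: "q < ?L"
      then have "2*q < L" using Suc.prems(1) by simp
      then have "tb (x+2*q) = tb (y+2*q)" using Suc.prems(2) by blast
      then show "tb (a+q) = tb (b+q)" using a b tb_odd'[of "a+q"] tb_odd'[of "b+q"] by (simp add: algebra_simps)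
    qed
    then have h: "a mod 2^(c+1) = b mod 2^(c+1)" using Suc.IH[of ?L] by simp
    have "x mod 2^(Suc c+1) = 2*(a mod 2^(c+1)) + 1"
      using a mod2[of "2^(c+1)" a] by simp
    moreover have "y mod 2^(Suc c+1) = 2*(b mod 2^(c+1)) + 1"
      using b mod2[of "2^(c+1)" b] by simp
    ultimately show ?thesis using h by simp
  qed
qed

lemma tb_pow: "tb (2^b + r) = (\<not> tb r)" if "r < 2^b"
  using tb_split[OF that, of 1] by simp

lemma tb_pow0: "tb (2^b) = True"
  using tb_pow[of 0 b] by simp

lemma sync_dvd:
  assumes "odd m" "3*2^c+1 \<le> m" "i \<le> j" "\<forall>p<m. tb (i*m+p) = tb (j*m+p)"
  shows "2^(c+1) dvd (j - i)"
proof -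
  have "(i*m) mod 2^(c+1) = (j*m) mod 2^(c+1)" using sync[OF assms(2) assms(4)] .
  moreover have "i*m \<le> j*m" using assms(3) by simp
  ultimately have "2^(c+1) dvd (j*m - i*m)" using mod_eq_dvd_iff_nat by metis
  then have d: "2^(c+1) dvd (j - i)*m" by (simp add: diff_mult_distrib)
  have "coprime (2^(c+1)) m" using assms(1) by simp
  then show ?thesis using d by (simp add: coprime_dvd_mult_left_iff)
qed

lemma shift_diff:
  assumes "i*m \<le> 2^n*u + r" "2^n*u + r < i*m + m" "r < 2^n" "tb u \<noteq> tb (u+m)" "j = i + 2^n"
  shows "\<exists>p<m. tb (i*m+p) \<noteq> tb (j*m+p)"
proof -
  define p where "p = 2^n*u + r - i*m"
  have p1: "i*m + p = 2^n*u + r" using assms(1) p_def by simp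
  have p2: "j*m + p = 2^n*(u+m) + r" using p1 assms(5) by (simp add: algebra_simps)
  have "p < m" using assms(1,2) p_def by simp
  moreover have "tb (i*m+p) \<noteq> tb (j*m+p)"
    unfolding p1 p2 using tb_split[OF assms(3)] assms(4) by simp
  ultimately show ?thesis by blast
qed

lemma DC: assumes "u < 2*2^c"
  shows "(tb u \<noteq> tb (u+(3*2^c+1))) = (tb (u mod 2^c) \<noteq> tb (u mod 2^c + 1))"
proof (cases "u < 2^c")
  case True
  then have um: "u mod 2^c = u" by simp
  have "tb (u+(3*2^c+1)) = tb (u+1)"
  proof (cases "u+1 < 2^c")
    case True
    have e: "u+(3*2^c+1) = 2^(c+1) + (2^c+u+1)" by simp
    have "2^c+u+1 < 2^(c+1)" using True by simp
    then have "tb (2^(c+1) + (2^c+u+1)) = (\<not> tb (2^c+u+1))" by (rule tb_pow)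
    then have "tb (u+(3*2^c+1)) = (\<not> tb (2^c+(u+1)))" unfolding e by (simp add: add.assoc)
    also have "\<dots> = tb (u+1)" using tb_pow[OF True] by simp
    finally show ?thesis .
  next
    case False
    then have u1: "u+1 = 2^c" using \<open>u < 2^c\<close> by simp
    then have e: "u+(3*2^c+1) = 2^(c+2)" by simp
    show ?thesis unfolding e u1 using tb_pow0[of "c+2"] tb_pow0[of c] by simp
  qed
  then show ?thesis using um by simp
next
  case False
  define v where "v = u - 2^c"
  have v: "u = 2^c + v" "v < 2^c" using False assms v_def by auto
  then have um: "u mod 2^c = v" by simp
  have e: "u+(3*2^c+1) = 2^(c+2) + (v+1)" using v by simp
  have "v+1 < 2^(c+2)" using v by simp
  then have "tb (u+(3*2^c+1)) = (\<not> tb (v+1))" unfolding e by (rule tb_pow)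
  moreover have "tb u = (\<not> tb v)" using tb_pow[OF v(2)] v(1) by simp
  ultimately show ?thesis using um by simp
qed

lemma DC2: assumes "u+1 < 2*2^c"
  shows "tb u \<noteq> tb (u+(3*2^c+1)) \<or> tb (u+1) \<noteq> tb ((u+1)+(3*2^c+1))"
proof (cases "u mod 2^c + 1 < 2^c")
  case True
  have "(u+1) mod 2^c = u mod 2^c + 1" using True by (simp add: mod_Suc)
  then show ?thesis using DC[of u c] DC[of "u+1" c] assms no3[of "u mod 2^c"]
    by (auto simp: add.assoc)
next
  case False
  have "u mod 2^c < 2^c" by simp
  then have "u mod 2^c + 1 = 2^c" using False by linarith
  then have "(u+1) mod 2^c = 0" by (simp add: mod_Suc)
  then show ?thesis using DC[of "u+1" c] assms by simp
qed


lemma DA: assumes "u+3 < 2^(c+2)" shows "tb (u + (2^(c+2)+3)) = (\<not> tb (u+3))"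
proof -
  have e: "u + (2^(c+2)+3) = 2^(c+2) + (u+3)" by simp
  show ?thesis unfolding e by (rule tb_pow[OF assms])
qed

lemma noSq: "\<not> (tb u \<noteq> tb (u+3) \<and> tb (u+1) \<noteq> tb (u+4) \<and> tb (u+2) \<noteq> tb (u+5))"
proof (cases "even u")
  case True
  then obtain w where w: "u = 2*w" by blast
  have q: "u = 2*w" "u+1 = 2*w+1" "u+2 = 2*(w+1)" "u+3 = 2*(w+1)+1" "u+4 = 2*(w+2)" "u+5 = 2*(w+2)+1"
    using w by simp_all
  have "tb u = tb w" unfolding q(1) by (rule tb_even)
  moreover have "tb (u+1) = (\<not> tb w)" unfolding q(2) by (rule tb_odd')
  moreover have "tb (u+2) = tb (w+1)" unfolding q(3) by (rule tb_even)
  moreover have "tb (u+3) = (\<not> tb (w+1))" unfolding q(4) by (rule tb_odd')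
  moreover have "tb (u+4) = tb (w+2)" unfolding q(5) by (rule tb_even)
  moreover have "tb (u+5) = (\<not> tb (w+2))" unfolding q(6) by (rule tb_odd')
  ultimately show ?thesis using no3[of w] by blast
next
  case False
  then obtain w where w: "u = 2*w+1" using oddE by blast
  have q: "u = 2*w+1" "u+1 = 2*(w+1)" "u+2 = 2*(w+1)+1" "u+3 = 2*(w+2)" "u+4 = 2*(w+2)+1" "u+5 = 2*(w+3)"
    using w by simp_all
  have "tb u = (\<not> tb w)" unfolding q(1) by (rule tb_odd')
  moreover have "tb (u+1) = tb (w+1)" unfolding q(2) by (rule tb_even)
  moreover have "tb (u+2) = (\<not> tb (w+1))" unfolding q(3) by (rule tb_odd')
  moreover have "tb (u+3) = tb (w+2)" unfolding q(4) by (rule tb_even)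
  moreover have "tb (u+4) = (\<not> tb (w+2))" unfolding q(5) by (rule tb_odd')
  moreover have "tb (u+5) = tb (w+3)" unfolding q(6) by (rule tb_even)
  moreover have "w+1+1 = w+2" "w+1+2 = w+3" by simp_all
  ultimately show ?thesis using no3[of w] no3[of "w+1"] by metis
qed

lemma DA3: assumes "u+5 < 2^(c+2)"
  shows "tb u \<noteq> tb (u+(2^(c+2)+3)) \<or> tb (u+1) \<noteq> tb ((u+1)+(2^(c+2)+3)) \<or> tb (u+2) \<noteq> tb ((u+2)+(2^(c+2)+3))"
proof -
  have a: "u+1+3 < 2^(c+2)" "u+2+3 < 2^(c+2)" "u+3 < 2^(c+2)" using assms by simp_all
  have b: "u+1+3 = u+4" "u+2+3 = u+5" by simp_all
  show ?thesis using DA[OF a(1)] DA[OF a(2)] DA[OF a(3)] noSq[of u] unfolding b by metis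
qed

lemma tm_Suc: "tm (Suc n) = (if tb n then 1 else 0)"
  by (simp add: tm_def tb_def odd_iff_mod_2_eq_one)

definition blk :: "nat \<Rightarrow> nat \<Rightarrow> nat list" where
  "blk m i = map tm [i*m+1..<i*m+1+m]"

lemma concat_blk: "tm_factor 1 (k*m) = concat (map (blk m) [0..<k])"
proof (induction k)
  case 0 then show ?case by (simp add: tm_factor_def)
next
  case (Suc k)
  have e: "Suc (Suc k * m) = (k*m+1) + m" by simp
  have "[1..<Suc (Suc k*m)] = [1..<k*m+1] @ [k*m+1..<k*m+1+m]"
    unfolding e by (rule upt_add_eq_append) simp
  then have "tm_factor 1 (Suc k * m) = tm_factor 1 (k*m) @ blk m k"
    unfolding tm_factor_def blk_def by simp
  then show ?case using Suc.IH by simp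
qed

lemma anti:
  assumes "\<forall>i j. i<j \<longrightarrow> j<k \<longrightarrow> (\<exists>p<m. tb (i*m+p) \<noteq> tb (j*m+p))"
  shows "anti_power k (tm_factor 1 (k*m))"
  unfolding anti_power_def
proof (intro exI conjI)
  show "length (map (blk m) [0..<k]) = k" by simp
  show "tm_factor 1 (k*m) = concat (map (blk m) [0..<k])" by (rule concat_blk)
  have len: "length (blk m i) = m" for i by (simp add: blk_def)
  show "\<forall>u\<in>set (map (blk m) [0..<k]). \<forall>v\<in>set (map (blk m) [0..<k]). length u = length v"
    using len by simp
  have ne: "blk m i \<noteq> blk m j" if "i < j" "j < k" for i j
  proof
    assume eq: "blk m i = blk m j"
    have "\<exists>p<m. tb (i*m+p) \<noteq> tb (j*m+p)" using assms that by simp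
    then obtain p where p: "p < m" "tb (i*m+p) \<noteq> tb (j*m+p)" by blast
    have "blk m i ! p = tm (Suc (i*m+p))" "blk m j ! p = tm (Suc (j*m+p))"
      using p(1) unfolding blk_def by (simp_all del: upt_Suc)
    then show False using p(2) eq by (simp add: tm_Suc split: if_splits)
  qed
  have "inj_on (blk m) {0..<k}"
  proof (rule inj_onI)
    fix i j assume "i \<in> {0..<k}" "j \<in> {0..<k}" "blk m i = blk m j"
    then show "i = j" using ne[of i j] ne[of j i] by (metis atLeastLessThan_iff linorder_cases)
  qed
  then show "distinct (map (blk m) [0..<k])" by (simp add: distinct_map)
qed

lemma cand0:
  assumes "j = i + 2^n" "0 < m" "tb (i*m div 2^n) \<noteq> tb (i*m div 2^n + m)"
  shows "\<exists>p<m. tb (i*m+p) \<noteq> tb (j*m+p)"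
proof (rule shift_diff[where u="i*m div 2^n" and r="i*m mod 2^n" and n=n])
  show "i*m \<le> 2^n*(i*m div 2^n) + i*m mod 2^n" by simp
  show "2^n*(i*m div 2^n) + i*m mod 2^n < i*m + m" using assms(2) by simp
  show "i*m mod 2^n < 2^n" by simp
qed (use assms in auto)

lemma cand1:
  assumes "j = i + 2^n" "s*2^n < m" "0 < s" "tb (i*m div 2^n + s) \<noteq> tb (i*m div 2^n + s + m)"
  shows "\<exists>p<m. tb (i*m+p) \<noteq> tb (j*m+p)"
proof (rule shift_diff[where u="i*m div 2^n + s" and r=0 and n=n])
  have a: "2^n*(i*m div 2^n) + i*m mod 2^n = i*m" by simp
  have b: "i*m mod 2^n < 2^n" by simp
  have "2^n*(i*m div 2^n + s) = 2^n*(i*m div 2^n) + s*2^n" by (simp add: algebra_simps)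
  moreover have "2^n \<le> s*2^n" using assms(3) by simp
  ultimately show "i*m \<le> 2^n*(i*m div 2^n + s) + 0" using a b by linarith
  show "2^n*(i*m div 2^n + s) + 0 < i*m + m" using \<open>2^n*(i*m div 2^n + s) = _\<close> a assms(2) by linarith
qed (use assms in auto)

lemma famC:
  assumes c: "1 \<le> c" and k: "k \<le> 2^(c+1) + (2^(c+1)*(2^(c+1)-1)) div (3*2^c+1)"
  shows "3*2^c+1 \<in> F_set k"
proof -
  define P :: nat where "P = 2^(c+1)"
  define m :: nat where "m = 3*2^c+1"
  have Pm: "P < m" "P = 2*2^c" unfolding P_def m_def by simp_all
  have om: "odd m" using c unfolding m_def by simp
  have X: "(P*(P-1)) div m \<le> P - 1"
  proof -
    have "(P*(P-1)) div m \<le> (P*(P-1)) div P" by (rule div_le_mono2) (use Pm in auto)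
    also have "\<dots> = P - 1" unfolding P_def by simp
    finally show ?thesis .
  qed
  have kk: "k \<le> P + (P*(P-1)) div m" using k unfolding P_def m_def .
  have "anti_power k (tm_factor 1 (k*m))"
  proof (rule anti, intro allI impI)
    fix i j assume ij: "i < j" "j < k"
    show "\<exists>p<m. tb (i*m+p) \<noteq> tb (j*m+p)"
    proof (rule ccontr)
      assume "\<not> ?thesis"
      then have eq: "\<forall>p<m. tb (i*m+p) = tb (j*m+p)" by blast
      have "P dvd (j - i)" using sync_dvd[OF om _ _ eq] ij unfolding P_def m_def by simp
      then obtain q where q: "j - i = P*q" by blast
      have "q \<noteq> 0"
      proof
        assume "q = 0" then have "j - i = 0" using q by simp
        then show False using ij by simp
      qed
      moreover have "P*q < P*2"
      proof -
        have P0: "0 < P" unfolding P_def by simp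
        have "(P*(P-1)) div m < P" using X P0 by linarith
        then have "j < 2*P" using ij kk by linarith
        moreover have "j - i \<le> j" by simp
        ultimately show ?thesis using q by linarith
      qed
      then have "q < 2" by simp
      ultimately have "q = 1" by simp
      then have jP: "j = i + P" using q ij by simp
      then have j: "j = i + 2^(c+1)" unfolding P_def .
      have "i < (P*(P-1)) div m" using jP ij kk by linarith
      then have i1: "i+1 \<le> (P*(P-1)) div m" by simp
      have m0: "0 < m" using Pm by simp
      have "(i+1)*m \<le> P*(P-1)" using i1 less_eq_div_iff_mult_less_eq[OF m0] by blast
      then have "i*m < P*(P-1)" using Pm by simp
      then have "i*m div P < P - 1" by (simp add: div_less_iff_less_mult mult.commute)
      then have u: "i*m div P + 1 < 2*2^c" using Pm by simp
      have "m = 3*2^c+1" by (simp add: m_def)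
      from DC2[OF u] show False
      proof
        assume "tb (i*m div P) \<noteq> tb (i*m div P + (3*2^c+1))"
        then have "\<exists>p<m. tb (i*m+p) \<noteq> tb (j*m+p)"
          using cand0[OF j, of m] unfolding P_def m_def by simp
        then show False using eq by blast
      next
        assume "tb (i*m div P + 1) \<noteq> tb (i*m div P + 1 + (3*2^c+1))"
        then have "\<exists>p<m. tb (i*m+p) \<noteq> tb (j*m+p)"
          using cand1[OF j, of 1 m] Pm unfolding P_def m_def by simp
        then show False using eq by blast
      qed
    qed
  qed
  then show ?thesis using om unfolding F_set_def m_def by simp
qed

lemma famA:
  assumes k: "k \<le> 2^(c+2) - 3"
  shows "2^(c+2)+3 \<in> F_set k"
proof -
  define P :: nat where "P = 2^(c+1)"
  define m :: nat where "m = 2^(c+2)+3"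
  have Pm: "2*P < m" "m = 2*P+3" "2^(c+2) = 2*P" unfolding P_def m_def by simp_all
  have om: "odd m" unfolding m_def by simp
  have h3: "(3::nat) \<le> 2^(c+2)"
  proof -
    have a: "(2::nat)^(c+2) = 4*2^c" by simp
    have b: "(1::nat) \<le> 2^c" by simp
    show ?thesis unfolding a using b by linarith
  qed
  have kk: "k + 3 \<le> 2*P" using k le_diff_conv2[OF h3] Pm(3) by simp
  have sm: "3*2^c+1 \<le> m" unfolding m_def by simp
  have "anti_power k (tm_factor 1 (k*m))"
  proof (rule anti, intro allI impI)
    fix i j assume ij: "i < j" "j < k"
    show "\<exists>p<m. tb (i*m+p) \<noteq> tb (j*m+p)"
    proof (rule ccontr)
      assume "\<not> ?thesis"
      then have eq: "\<forall>p<m. tb (i*m+p) = tb (j*m+p)" by blast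
      have "P dvd (j - i)" using sync_dvd[OF om sm _ eq] ij unfolding P_def by simp
      then obtain q where q: "j - i = P*q" by blast
      have "q \<noteq> 0"
      proof
        assume "q = 0" then have "j - i = 0" using q by simp
        then show False using ij by simp
      qed
      moreover have "P*q < P*2"
      proof -
        have "j - i \<le> j" by simp
        then show ?thesis using q ij kk by linarith
      qed
      then have "q < 2" by simp
      ultimately have "q = 1" by simp
      then have jP: "j = i + P" using q ij by simp
      then have j: "j = i + 2^(c+1)" unfolding P_def .
      have i4: "i + 4 \<le> P" using jP ij kk by linarith
      have lt: "i*m < (2*P-5)*P"
      proof -
        obtain Q where Q: "P = i + 4 + Q" using i4 le_iff_add by blast
        have e: "2*P-5 = 2*Q+2*i+3" using Q by simp
        show ?thesis unfolding e Pm(2) Q by (simp add: algebra_simps)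
      qed
      have P0: "0 < P" unfolding P_def by simp
      have "i*m div P < 2*P - 5" using lt div_less_iff_less_mult[OF P0] by simp
      then have u: "i*m div P + 5 < 2^(c+2)" unfolding Pm(3) using i4 by arith
      from DA3[OF u] show False
      proof (elim disjE)
        assume "tb (i*m div P) \<noteq> tb (i*m div P + (2^(c+2)+3))"
        then have "\<exists>p<m. tb (i*m+p) \<noteq> tb (j*m+p)"
          using cand0[OF j, of m] unfolding P_def m_def by simp
        then show False using eq by blast
      next
        assume "tb (i*m div P + 1) \<noteq> tb (i*m div P + 1 + (2^(c+2)+3))"
        then have "\<exists>p<m. tb (i*m+p) \<noteq> tb (j*m+p)"
          using cand1[OF j, of 1 m] Pm unfolding P_def m_def by simp
        then show False using eq by blast
      next
        assume "tb (i*m div P + 2) \<noteq> tb (i*m div P + 2 + (2^(c+2)+3))"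
        then have "\<exists>p<m. tb (i*m+p) \<noteq> tb (j*m+p)"
          using cand1[OF j, of 2 m] Pm unfolding P_def m_def by simp
        then show False using eq by blast
      qed
    qed
  qed
  then show ?thesis using om unfolding F_set_def m_def by simp
qed


lemma gamma_le: "m \<in> F_set k \<Longrightarrow> gamma k \<le> m"
  unfolding gamma_def by (rule Least_le)

lemma log_ex: "2 \<le> k \<Longrightarrow> \<exists>c. 2^(c+1) \<le> k \<and> k < (2::nat)^(c+2)"
proof (induction k rule: less_induct)
  case (less k)
  show ?case
  proof (cases "k < 4")
    case True then show ?thesis using less.prems by (intro exI[of _ 0]) simp
  next
    case False
    then have "2 \<le> k div 2" "k div 2 < k" by auto
    then obtain c where c: "2^(c+1) \<le> k div 2" "k div 2 < (2::nat)^(c+2)" using less.IH by blast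
    have "2^(Suc c+1) \<le> k" using c(1) by simp
    moreover have "k < 2^(Suc c+2)" using c(2) by simp
    ultimately show ?thesis by blast
  qed
qed

definition Dv :: "nat \<Rightarrow> nat" where "Dv H = (2*H*(2*H-1)) div (3*H+1)"

lemma Dv_ge1: "1 \<le> H \<Longrightarrow> H - 1 \<le> Dv H"
proof -
  assume "1 \<le> H"
  then obtain G where G: "H = G + 1" by (metis add.commute le_iff_add)
  have "(H-1)*(3*H+1) \<le> 2*H*(2*H-1)" unfolding G by (simp add: algebra_simps)
  then show ?thesis unfolding Dv_def by (simp add: less_eq_div_iff_mult_less_eq)
qed

lemma Dv_ge3: "3 \<le> H \<Longrightarrow> H \<le> Dv H"
proof -
  assume "3 \<le> H"
  then obtain G where G: "H = G + 3" by (metis add.commute le_iff_add)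
  have "H*(3*H+1) \<le> 2*H*(2*H-1)" unfolding G by (simp add: algebra_simps)
  then show ?thesis unfolding Dv_def by (simp add: less_eq_div_iff_mult_less_eq)
qed

lemma Dv_le: "Dv H \<le> 2*H - 1"
proof (cases "H = 0")
  case True then show ?thesis by (simp add: Dv_def)
next
  case False
  have "Dv H \<le> (2*H*(2*H-1)) div (2*H)" unfolding Dv_def
    by (rule div_le_mono2) (use False in auto)
  also have "\<dots> = 2*H - 1" using False by simp
  finally show ?thesis .
qed

lemma Dv_ratio: "3 \<le> H \<Longrightarrow> 10*H*(3*H+1) \<le> (9*H+10)*(2*H + Dv H)"
proof -
  assume H: "3 \<le> H"
  define D where "D = Dv H"
  define n where "n = 2*H*(2*H-1)"
  have n: "n + 2*H = 4*(H*H)"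
  proof -
    obtain G where G: "H = G + 1" using H by (metis add.commute le_iff_add le_trans one_le_numeral)
    show ?thesis unfolding n_def G by (simp add: algebra_simps)
  qed
  have "n < (n div (3*H+1) + 1)*(3*H+1)"
    by (metis add.commute div_mult_mod_eq mod_less_divisor mult_Suc plus_1_eq_Suc zero_less_Suc add_less_cancel_left)
  then have a: "n < (D+1)*(3*H+1)" unfolding D_def Dv_def n_def .
  have b: "H \<le> D" using Dv_ge3[OF H] unfolding D_def .
  have a': "4*(H*H) < 3*(H*D) + D + 5*H + 1" using a n by (simp add: algebra_simps)
  have g: "(9*H+10)*(2*H + D) = 18*(H*H) + 9*(H*D) + 20*H + 10*D" by (simp add: algebra_simps)
  have "10*H*(3*H+1) = 30*(H*H) + 10*H" by (simp add: algebra_simps)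
  then show ?thesis unfolding D_def[symmetric] g using a' b by linarith
qed

lemma famC': "1 \<le> c \<Longrightarrow> k \<le> 2*2^c + Dv (2^c) \<Longrightarrow> 3*2^c+1 \<in> F_set k"
  using famC[of c k] unfolding Dv_def by (simp add: mult.assoc)

lemma gamma_bound: assumes "4 \<le> k" shows "2*gamma k \<le> 3*k+16"
proof -
  obtain c where c: "2^(c+1) \<le> k" "k < (2::nat)^(c+2)" using log_ex[of k] assms by auto
  define H :: nat where "H = 2^c"
  have c1: "1 \<le> c"
  proof (rule ccontr)
    assume "\<not> 1 \<le> c" then have "c = 0" by simp
    then show False using c assms by simp
  qed
  have "(2::nat)^1 \<le> 2^c" by (rule power_increasing) (use c1 in auto)
  then have H2: "2 \<le> H" unfolding H_def by simp
  have kH: "2*H \<le> k" "k < 4*H" using c unfolding H_def by simp_all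
  show ?thesis
  proof (cases "k \<le> 2*H + Dv H")
    case True
    have "gamma k \<le> 3*H+1" using gamma_le[OF famC'[OF c1]] True unfolding H_def by simp
    then show ?thesis using kH by linarith
  next
    case False
    show ?thesis
    proof (cases "k \<le> 4*H - 3")
      case True
      have "k \<le> 2^(c+2) - 3" using True unfolding H_def by simp
      then have "gamma k \<le> 4*H+3" using gamma_le[OF famA[of k c]] unfolding H_def by simp
      moreover have "H - 1 \<le> Dv H" using Dv_ge1 H2 by simp
      ultimately show ?thesis using kH False by linarith
    next
      case False
      have c2: "1 \<le> c+1" by simp
      have "k \<le> 2*2^(c+1) + Dv (2^(c+1))" using kH unfolding H_def by simp
      then have "gamma k \<le> 3*2^(c+1)+1" using gamma_le[OF famC'[OF c2]] by simp
      then have "gamma k \<le> 6*H+1" unfolding H_def by simp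
      then show ?thesis using kH False by linarith
    qed
  qed
qed

definition KC :: "nat \<Rightarrow> nat" where "KC c = 2*2^c + Dv (2^c)"

lemma KC_mono: "strict_mono (\<lambda>c. KC (c+3))"
unfolding strict_mono_Suc_iff
proof
  fix c
  have "Dv (2^(c+3)) \<le> 2*2^(c+3) - 1" by (rule Dv_le)
  moreover have "(1::nat) \<le> 2^(c+3)" by simp
  ultimately have "KC (c+3) < 4*2^(c+3)" unfolding KC_def by linarith
  also have "\<dots> = 2*2^(Suc c+3)" by (simp add: power_add)
  also have "\<dots> \<le> KC (Suc c + 3)" unfolding KC_def by simp
  finally show "KC (c+3) < KC (Suc c+3)" .
qed

lemma KC_ratio: "real (gamma (KC (c+3))) / real (KC (c+3)) \<le> 9/10 + (1/2)^c"
proof -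
  define H :: nat where "H = 2^(c+3)"
  define K where "K = KC (c+3)"
  have K: "K = 2*H + Dv H" unfolding K_def KC_def H_def ..
  have "(2::nat)^3 \<le> 2^(c+3)" by (rule power_increasing) simp_all
  then have H8: "8 \<le> H" unfolding H_def by simp
  have g: "gamma K \<le> 3*H+1" using gamma_le[OF famC'[of "c+3" K]] K unfolding H_def by simp
  have r: "10*H*(3*H+1) \<le> (9*H+10)*K" using Dv_ratio[of H] H8 K by simp
  have Kpos: "0 < real K" using K H8 by simp
  have Hpos: "0 < real H" using H8 by simp
  have "real (gamma K) / real K \<le> real (3*H+1) / real K"
    using g Kpos by (simp add: divide_right_mono)
  also have "\<dots> \<le> (9*real H+10)/(10*real H)"
  proof -
    have "real (10*H*(3*H+1)) \<le> real ((9*H+10)*K)" using r by (simp only: of_nat_le_iff)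
    then have "10*real H*(3*real H+1) \<le> (9*real H+10)*real K" by (simp add: algebra_simps)
    then have "(3*real H+1)*(10*real H) \<le> (9*real H+10)*real K" by (simp add: algebra_simps)
    then show ?thesis using Kpos Hpos by (simp add: divide_simps add.commute)
  qed
  also have "\<dots> = 9/10 + 1/real H" using Hpos by (simp add: field_simps)
  also have "1/real H \<le> (1/2)^c"
  proof -
    have "real H = 2^(c+3)" unfolding H_def by simp
    then have "1/real H = (1/2)^(c+3)" by (simp add: power_one_over)
    also have "\<dots> \<le> (1/2)^c" by (rule power_decreasing) simp_all
    finally show ?thesis .
  qed
  finally show ?thesis unfolding K_def by simp
qed

theorem theorem4:
  shows "liminf (\<lambda>k. ereal (real (gamma k) / real k)) \<le> ereal (9/10) \<and>
         limsup (\<lambda>k. ereal (real (gamma k) / real k)) \<le> ereal (3/2)"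
proof
  define f where "f = (\<lambda>k. ereal (real (gamma k) / real k))"
  have "liminf f \<le> liminf (f \<circ> (\<lambda>c. KC (c+3)))" by (rule liminf_subseq_mono[OF KC_mono])
  also have "\<dots> \<le> liminf (\<lambda>c. ereal (9/10 + (1/2)^c))"
    by (rule Liminf_mono) (use KC_ratio in \<open>auto simp: f_def\<close>)
  also have "\<dots> = ereal (9/10)"
  proof (rule lim_imp_Liminf)
    show "\<not> trivial_limit (sequentially :: nat filter)" by simp
    have "(\<lambda>c. (1/2::real)^c) \<longlonglongrightarrow> 0" by (rule LIMSEQ_realpow_zero) simp_all
    then have "(\<lambda>c. 9/10 + (1/2::real)^c) \<longlonglongrightarrow> 9/10 + 0" by (intro tendsto_add tendsto_const)
    then show "(\<lambda>c. ereal (9/10 + (1/2)^c)) \<longlonglongrightarrow> ereal (9/10)" by (intro tendsto_ereal) simp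
  qed
  finally show "liminf (\<lambda>k. ereal (real (gamma k) / real k)) \<le> ereal (9/10)" unfolding f_def .
next
  have ev: "eventually (\<lambda>k. ereal (real (gamma k) / real k) \<le> ereal (3/2 + 8/real k)) sequentially"
    using eventually_ge_at_top[of 4]
  proof (rule eventually_mono)
    fix k :: nat assume k: "4 \<le> k"
    have "real (2*gamma k) \<le> real (3*k+16)" using gamma_bound[OF k] by (simp only: of_nat_le_iff)
    then have a: "2*real (gamma k) \<le> 3*real k + 16" by simp
    have kp: "0 < real k" using k by simp
    have "real (gamma k) / real k \<le> 3/2 + 8/real k"
      using a kp by (simp add: divide_simps)
    then show "ereal (real (gamma k) / real k) \<le> ereal (3/2 + 8/real k)" by simp
  qed
  have "limsup (\<lambda>k. ereal (real (gamma k) / real k)) \<le> limsup (\<lambda>k. ereal (3/2 + 8/real k))"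
    by (rule Limsup_mono[OF ev])
  also have "\<dots> = ereal (3/2)"
  proof (rule lim_imp_Limsup)
    show "\<not> trivial_limit (sequentially :: nat filter)" by simp
    have "(\<lambda>k. 8/real k) \<longlonglongrightarrow> 0" by (rule lim_const_over_n)
    then have "(\<lambda>k. 3/2 + 8/real k) \<longlonglongrightarrow> 3/2 + 0" by (intro tendsto_add tendsto_const)
    then show "(\<lambda>k. ereal (3/2 + 8/real k)) \<longlonglongrightarrow> ereal (3/2)" by (intro tendsto_ereal) simp
  qed
  finally show "limsup (\<lambda>k. ereal (real (gamma k) / real k)) \<le> ereal (3/2)" .
qed
end
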